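(* Let $\overrightarrow{G}$ be a digraph of order $n$ with no weakly connected components of order less than $4$. Then $\overrightarrow{G}$ has a $\Gamma$-irregular labeling for every finite Abelian group $\Gamma$ such that $|\Gamma|\ge 2n+1$.
   Context: For a digraph $\overrightarrow{G}=(V,A)$ and a finite Abelian group $\Gamma$, a labeling $\psi\colon A\to\Gamma$ is $\Gamma$-irregular if the map $\varphi_\psi\colon V\to\Gamma$, $\varphi_\psi(x)=\sum_{y\in N^-(x)}\psi((y,x))-\sum_{y\in N^+(x)}\psi((x,y))$, is injective (here $N^-(x)$ and $N^+(x)$ are the in- and out-neighbourhoods of $x$). A weakly connected component of $\overrightarrow{G}$ is the subdigraph induced by the vertex set of a connected component of the underlying undirected graph of $\overrightarrow{G}$. *)

theory Defs
  imports Main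
begin

definition digraph :: "'a set \<Rightarrow> ('a \<times> 'a) set \<Rightarrow> bool" where
  "digraph V A \<longleftrightarrow> finite V \<and> A \<subseteq> V \<times> V \<and> (\<forall>x. (x, x) \<notin> A)"

definition in_nbhd :: "('a \<times> 'a) set \<Rightarrow> 'a \<Rightarrow> 'a set" where
  "in_nbhd A x = {y. (y, x) \<in> A}"

definition out_nbhd :: "('a \<times> 'a) set \<Rightarrow> 'a \<Rightarrow> 'a set" where
  "out_nbhd A x = {y. (x, y) \<in> A}"

definition weighted_deg :: "('a \<times> 'a) set \<Rightarrow> ('a \<times> 'a \<Rightarrow> 'g::ab_group_add) \<Rightarrow> 'a \<Rightarrow> 'g" where
  "weighted_deg A \<psi> x =
     (\<Sum>y\<in>in_nbhd A x. \<psi> (y, x)) - (\<Sum>y\<in>out_nbhd A x. \<psi> (x, y))"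

definition group_irregular :: "'a set \<Rightarrow> ('a \<times> 'a) set \<Rightarrow> ('a \<times> 'a \<Rightarrow> 'g::ab_group_add) \<Rightarrow> bool" where
  "group_irregular V A \<psi> \<longleftrightarrow> inj_on (weighted_deg A \<psi>) V"

definition weak_component :: "'a set \<Rightarrow> ('a \<times> 'a) set \<Rightarrow> 'a \<Rightarrow> 'a set" where
  "weak_component V A x = {y \<in> V. (x, y) \<in> (A \<union> A\<inverse>)\<^sup>*}"

end

theory Submission
  imports Defs
begin

lemma fiber_count:
  fixes c :: "'g::{finite,ab_group_add}"
  shows "(\<Sum>z\<in>UNIV. card {x. x + x = c - z}) = card (UNIV :: 'g set)"
proof -
  have "(\<Sum>z\<in>UNIV. card {x. x + x = c - z}) = (\<Sum>z\<in>(UNIV::'g set). \<Sum>x\<in>UNIV. if z = c - (x + x) then 1 else (0::nat))"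
  proof (rule sum.cong)
    fix z :: 'g
    have "{x. x + x = c - z} = {x. z = c - (x + x)}" by (auto simp: eq_diff_eq add.commute)
    thus "card {x. x + x = c - z} = (\<Sum>x\<in>UNIV. if z = c - (x + x) then 1 else (0::nat))"
      by (simp add: sum.If_cases)
  qed simp
  also have "\<dots> = (\<Sum>x\<in>(UNIV::'g set). \<Sum>z\<in>UNIV. if z = c - (x + x) then 1 else (0::nat))"
    by (rule sum.swap)
  also have "\<dots> = (\<Sum>x\<in>(UNIV::'g set). (1::nat))" by (rule sum.cong) (simp_all add: sum.delta)
  also have "\<dots> = card (UNIV :: 'g set)" by simp
  finally show ?thesis .
qed

lemma comb3:
  fixes W :: "'g::{finite,ab_group_add} set" and c :: 'g
  assumes "2 * card W + 7 \<le> card (UNIV :: 'g set)"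
  shows "\<exists>x y z. x \<notin> W \<and> y \<notin> W \<and> z \<notin> W \<and> x \<noteq> y \<and> x \<noteq> z \<and> y \<noteq> z \<and> x + y + z = c"
proof -
  have "\<exists>z. z \<notin> W \<and> card {x. x + x = c - z} \<le> 4"
  proof (rule ccontr)
    assume "\<not> ?thesis"
    hence big: "\<And>z. z \<notin> W \<Longrightarrow> 5 \<le> card {x. x + x = c - z}" by force
    have "5 * card (UNIV - W) = (\<Sum>z\<in>UNIV - W. 5)" by simp
    also have "\<dots> \<le> (\<Sum>z\<in>UNIV - W. card {x. x + x = c - z})"
      by (rule sum_mono) (use big in auto)
    also have "\<dots> \<le> (\<Sum>z\<in>UNIV. card {x. x + x = c - z})"
      by (rule sum_mono2) auto
    also have "\<dots> = card (UNIV :: 'g set)" by (rule fiber_count)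
    finally have "5 * card (UNIV - W) \<le> card (UNIV :: 'g set)" .
    moreover have "card (UNIV - W) = card (UNIV :: 'g set) - card W"
      by (simp add: card_Diff_subset)
    ultimately show False using assms by linarith
  qed
  then obtain z where z: "z \<notin> W" "card {x. x + x = c - z} \<le> 4" by blast
  define B where "B = (W \<union> {z}) \<union> (\<lambda>w. c - z - w) ` (W \<union> {z}) \<union> {x. x + x = c - z}"
  have "card B \<le> card (W \<union> {z}) + card ((\<lambda>w. c - z - w) ` (W \<union> {z})) + card {x. x + x = c - z}"
    unfolding B_def by (meson card_Un_le add_le_mono order_trans le_refl)
  also have "card ((\<lambda>w. c - z - w) ` (W \<union> {z})) \<le> card (W \<union> {z})" by (rule card_image_le) simp
  also have "card (W \<union> {z}) \<le> card W + 1" using card_Un_le[of W "{z}"] by simp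
  finally have "card B < card (UNIV :: 'g set)" using z assms by linarith
  then obtain x where x: "x \<notin> B"
    by (metis UNIV_I card_mono finite subsetI leD)
  define y where "y = c - z - x"
  have xy: "x \<noteq> y"
  proof
    assume "x = y"
    hence "x + x = c - z" unfolding y_def by (simp add: algebra_simps)
    thus False using x unfolding B_def by auto
  qed
  have "y \<notin> W \<and> y \<noteq> z"
  proof (rule ccontr)
    assume "\<not> (y \<notin> W \<and> y \<noteq> z)"
    hence "y \<in> W \<union> {z}" by auto
    hence "x \<in> (\<lambda>w. c - z - w) ` (W \<union> {z})"
      by (rule rev_image_eqI) (simp add: y_def)
    thus False using x unfolding B_def by auto
  qed
  moreover have "x \<notin> W" "x \<noteq> z" using x unfolding B_def by auto
  moreover have "x + y + z = c" unfolding y_def by simp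
  ultimately show ?thesis using z xy by blast
qed


lemma zero_sum_inj:
  fixes C :: "'a set" and U :: "'g::{finite,ab_group_add} set"
  assumes "finite C" "3 \<le> card C" "2 * (card U + card C) + 1 \<le> card (UNIV :: 'g set)"
  shows "\<exists>g. inj_on g C \<and> g ` C \<inter> U = {} \<and> sum g C = 0"
proof -
  obtain c1 C1 where "C = insert c1 C1" "c1 \<notin> C1"
    using assms(2) by (metis card.empty not_numeral_le_zero Set.set_insert ex_in_conv)
  moreover obtain c2 C2 where "C1 = insert c2 C2" "c2 \<notin> C2"
    using assms(1,2) calculation by (metis card.empty card_insert_disjoint finite_insert
      Set.set_insert ex_in_conv not_less_eq_eq numeral_3_eq_3 zero_le one_le_numeral le_zero_eq
      Suc_n_not_le_n)
  moreover obtain c3 C' where "C2 = insert c3 C'" "c3 \<notin> C'"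
    using assms(1,2) calculation by (metis card.empty card_insert_disjoint finite_insert
      Set.set_insert ex_in_conv not_less_eq_eq numeral_3_eq_3 le_zero_eq
      Suc_n_not_le_n)
  ultimately have C: "C = insert c1 (insert c2 (insert c3 C'))" "c1 \<noteq> c2" "c1 \<noteq> c3" "c2 \<noteq> c3"
    "c1 \<notin> C'" "c2 \<notin> C'" "c3 \<notin> C'" by auto
  have fC': "finite C'" using assms(1) C by simp
  have cardC: "card C = card C' + 3" using C fC' by simp
  have "card C' \<le> card (UNIV - U)"
    using assms(3) cardC by (simp add: card_Diff_subset)
  then obtain g0 where g0: "g0 ` C' \<subseteq> UNIV - U" "inj_on g0 C'"
    using card_le_inj[OF fC', of "UNIV - U"] by auto
  define W where "W = U \<union> g0 ` C'"
  have "card W \<le> card U + card C'"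
    unfolding W_def using card_Un_le[of U "g0 ` C'"] card_image_le[OF fC', of g0] by linarith
  hence "2 * card W + 7 \<le> card (UNIV :: 'g set)" using assms(3) cardC by (simp add: algebra_simps)
  then obtain x y z where xyz: "x \<notin> W" "y \<notin> W" "z \<notin> W" "x \<noteq> y" "x \<noteq> z" "y \<noteq> z"
    "x + y + z = - sum g0 C'"
    using comb3 by blast
  define g where "g = g0(c1 := x, c2 := y, c3 := z)"
  have gC': "\<And>v. v \<in> C' \<Longrightarrow> g v = g0 v" using C unfolding g_def by auto
  have "inj_on g C"
    unfolding C inj_on_def
  proof (intro ballI impI)
    fix a b assume a: "a \<in> insert c1 (insert c2 (insert c3 C'))" and b: "b \<in> insert c1 (insert c2 (insert c3 C'))"
      and e: "g a = g b"
    have gv: "\<And>v. v \<in> C' \<Longrightarrow> g v \<in> W" using gC' unfolding W_def by auto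
    show "a = b"
      using a b e C xyz gv gC' g0(2) unfolding g_def
      by (auto simp: inj_on_def split: if_splits)
  qed
  moreover have "g ` C \<inter> U = {}"
    using C xyz g0(1) gC' unfolding W_def by (auto simp: g_def)
  moreover have "sum g C = 0"
  proof -
    have "sum g C = g c1 + (g c2 + (g c3 + sum g C'))" using C fC' by simp
    also have "sum g C' = sum g0 C'" using gC' by (rule sum.cong[OF refl])
    finally have "sum g C = g c1 + (g c2 + (g c3 + sum g0 C'))" .
    moreover have "g c1 = x" "g c2 = y" "g c3 = z" using C unfolding g_def by auto
    ultimately show ?thesis using xyz(7) by (simp add: add.assoc[symmetric])
  qed
  ultimately show ?thesis by blast
qed


definition realizable :: "'a set \<Rightarrow> ('a \<times> 'a) set \<Rightarrow> ('a \<Rightarrow> 'g::ab_group_add) \<Rightarrow> bool" where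
  "realizable V A f \<longleftrightarrow> (\<exists>\<psi>. \<forall>v\<in>V. weighted_deg A \<psi> v = f v)"

definition dfun :: "'a \<Rightarrow> 'a \<Rightarrow> 'g::ab_group_add \<Rightarrow> 'a \<Rightarrow> 'g" where
  "dfun a b g = (\<lambda>v. (if v = b then g else 0) - (if v = a then g else 0))"

lemma realizable_zero: "realizable V A (\<lambda>v. 0)"
  unfolding realizable_def by (rule exI[of _ "\<lambda>e. 0"]) (simp add: weighted_deg_def)

lemma realizable_add:
  assumes "realizable V A f" "realizable V A h"
  shows "realizable V A (\<lambda>v. f v + h v)"
proof -
  obtain p q where "\<forall>v\<in>V. weighted_deg A p v = f v" "\<forall>v\<in>V. weighted_deg A q v = h v"
    using assms unfolding realizable_def by blast
  thus ?thesis unfolding realizable_def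
    by (intro exI[of _ "\<lambda>e. p e + q e"]) (simp add: weighted_deg_def sum.distrib algebra_simps)
qed

lemma realizable_sum:
  assumes "finite I" "\<forall>i\<in>I. realizable V A (F i)"
  shows "realizable V A (\<lambda>v. \<Sum>i\<in>I. F i v)"
  using assms by (induction I rule: finite_induct) (auto intro: realizable_zero realizable_add)

lemma realizable_cong:
  assumes "realizable V A f" "\<forall>v\<in>V. f v = h v"
  shows "realizable V A h"
  using assms unfolding realizable_def by auto

lemma realizable_arc:
  assumes "digraph V A" "(a, b) \<in> A"
  shows "realizable V A (dfun a b g)"
proof -
  have fA: "finite A" using assms(1) unfolding digraph_def by (meson finite_SigmaI finite_subset)
  have ab: "a \<noteq> b" using assms unfolding digraph_def by auto
  have fin: "finite (in_nbhd A v)" "finite (out_nbhd A v)" for v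
  proof -
    have "in_nbhd A v \<subseteq> fst ` A" unfolding in_nbhd_def by force
    thus "finite (in_nbhd A v)" using fA finite_subset by blast
    have "out_nbhd A v \<subseteq> snd ` A" unfolding out_nbhd_def by force
    thus "finite (out_nbhd A v)" using fA finite_subset by blast
  qed
  have "weighted_deg A (\<lambda>e. if e = (a, b) then g else 0) v = dfun a b g v" for v
  proof -
    have "(\<Sum>y\<in>in_nbhd A v. (if (y, v) = (a, b) then g else 0)) = (if v = b then g else 0)"
    proof (cases "v = b")
      case True
      hence "(\<Sum>y\<in>in_nbhd A v. (if (y, v) = (a, b) then g else 0)) = (\<Sum>y\<in>in_nbhd A v. (if y = a then g else 0))"
        by simp
      also have "\<dots> = g" using fin(1)[of v] assms(2) True by (simp add: in_nbhd_def)
      finally show ?thesis using True by simp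
    qed simp
    moreover have "(\<Sum>y\<in>out_nbhd A v. (if (v, y) = (a, b) then g else 0)) = (if v = a then g else 0)"
    proof (cases "v = a")
      case True
      hence "(\<Sum>y\<in>out_nbhd A v. (if (v, y) = (a, b) then g else 0)) = (\<Sum>y\<in>out_nbhd A v. (if y = b then g else 0))"
        by simp
      also have "\<dots> = g" using fin(2)[of v] assms(2) True by (simp add: out_nbhd_def)
      finally show ?thesis using True by simp
    qed simp
    ultimately show ?thesis unfolding weighted_deg_def dfun_def by simp
  qed
  thus ?thesis unfolding realizable_def by blast
qed

lemma realizable_path:
  assumes "digraph V A" "(a, b) \<in> (A \<union> A\<inverse>)\<^sup>*"
  shows "\<forall>g. realizable V A (dfun a b g)"
  using assms(2)
proof (induction rule: rtrancl_induct)
  case base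
  show ?case by (simp add: dfun_def realizable_zero)
next
  case (step y z)
  show ?case
  proof
    fix g :: 'b
    have "realizable V A (dfun y z g)"
    proof (cases "(y, z) \<in> A")
      case True
      thus ?thesis using realizable_arc[OF assms(1)] by blast
    next
      case False
      hence "(z, y) \<in> A" using step by auto
      hence "realizable V A (dfun z y (- g))" using realizable_arc[OF assms(1)] by blast
      moreover have "dfun z y (- g) = dfun y z g" by (auto simp: dfun_def)
      ultimately show ?thesis by simp
    qed
    hence "realizable V A (\<lambda>v. dfun a y g v + dfun y z g v)"
      using step.IH realizable_add by blast
    moreover have "(\<lambda>v. dfun a y g v + dfun y z g v) = dfun a z g" by (auto simp: dfun_def)
    ultimately show "realizable V A (dfun a z g)" by simp
  qed
qed


lemma component_real:
  fixes U :: "'g::{finite,ab_group_add} set"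
  assumes dg: "digraph V A" and xV: "x \<in> V" and C: "C = weak_component V A x" and c3: "3 \<le> card C"
    and cardU: "2 * (card U + card C) + 1 \<le> card (UNIV :: 'g set)"
  shows "\<exists>h :: 'a \<Rightarrow> 'g. realizable V A h \<and> (\<forall>v\<in>V-C. h v = 0) \<and> inj_on h C \<and> h ` C \<inter> U = {}"
proof -
  have fV: "finite V" using dg unfolding digraph_def by simp
  have CV: "C \<subseteq> V" using C unfolding weak_component_def by auto
  have fC: "finite C" using fV CV finite_subset by blast
  obtain g :: "'a \<Rightarrow> 'g" where g: "inj_on g C" "g ` C \<inter> U = {}" "sum g C = 0"
    using zero_sum_inj[OF fC c3 cardU] by blast
  define h where "h = (\<lambda>w. \<Sum>v\<in>C. dfun x v (g v) w)"
  have "realizable V A h" unfolding h_def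
  proof (rule realizable_sum[OF fC], intro ballI)
    fix v assume "v \<in> C"
    hence "(x, v) \<in> (A \<union> A\<inverse>)\<^sup>*" using C unfolding weak_component_def by auto
    thus "realizable V A (dfun x v (g v))" using realizable_path[OF dg] by blast
  qed
  moreover have hw: "h w = (if w \<in> C then g w else 0)" for w
  proof -
    have "h w = (\<Sum>v\<in>C. if w = v then g v else 0) - (\<Sum>v\<in>C. if w = x then g v else 0)"
      unfolding h_def dfun_def by (simp add: sum_subtractf)
    also have "\<dots> = (if w \<in> C then g w else 0)" using fC g(3) by (cases "w = x") simp_all
    finally show ?thesis .
  qed
  ultimately show ?thesis using g
    by (intro exI[of _ h]) (auto simp: inj_on_def)
qed

lemma E_sym:
  assumes "(a, b) \<in> (A \<union> A\<inverse>)\<^sup>*" shows "(b, a) \<in> (A \<union> A\<inverse>)\<^sup>*"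
proof -
  have "(b, a) \<in> ((A \<union> A\<inverse>)\<inverse>)\<^sup>*" using assms by (simp add: rtrancl_converse)
  moreover have "(A \<union> A\<inverse>)\<inverse> = A \<union> A\<inverse>" by auto
  ultimately show ?thesis by simp
qed

theorem corollary4p5:
  fixes V :: "'a set" and A :: "('a \<times> 'a) set"
  assumes "digraph V A"
    and "\<forall>x\<in>V. card (weak_component V A x) \<ge> 4"
    and "card (UNIV :: 'g set) \<ge> 2 * card V + 1"
  shows "\<exists>\<psi> :: 'a \<times> 'a \<Rightarrow> 'g::{finite, ab_group_add}. group_irregular V A \<psi>"
proof -
  have fV: "finite V" using assms(1) unfolding digraph_def by simp
  define E where "E = (A \<union> A\<inverse>)\<^sup>*"
  define closedS where "closedS S \<longleftrightarrow> S \<subseteq> V \<and> (\<forall>w\<in>S. \<forall>y\<in>V. (w, y) \<in> E \<longrightarrow> y \<in> S)" for S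
  have main: "\<forall>S. closedS S \<longrightarrow> card (V - S) = k \<longrightarrow>
      (\<exists>f :: 'a \<Rightarrow> 'g. realizable V A f \<and> inj_on f S \<and> (\<forall>v\<in>V-S. f v = 0)) \<longrightarrow>
      (\<exists>f :: 'a \<Rightarrow> 'g. realizable V A f \<and> inj_on f V)" for k
  proof (induction k rule: less_induct)
    case (less k)
    show ?case
    proof (intro allI impI)
      fix S assume cS: "closedS S" and k: "card (V - S) = k"
        and "\<exists>f :: 'a \<Rightarrow> 'g. realizable V A f \<and> inj_on f S \<and> (\<forall>v\<in>V-S. f v = 0)"
      then obtain f :: "'a \<Rightarrow> 'g" where f: "realizable V A f" "inj_on f S" "\<forall>v\<in>V-S. f v = 0" by blast
      show "\<exists>f :: 'a \<Rightarrow> 'g. realizable V A f \<and> inj_on f V"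
      proof (cases "S = V")
        case True thus ?thesis using f by blast
      next
        case False
        then obtain x where x: "x \<in> V" "x \<notin> S" using cS unfolding closedS_def by blast
        define C where "C = weak_component V A x"
        have CV: "C \<subseteq> V" and xC: "x \<in> C" using x unfolding C_def weak_component_def by auto
        have inC: "\<And>w. w \<in> C \<longleftrightarrow> w \<in> V \<and> (x, w) \<in> E" unfolding C_def weak_component_def E_def by auto
        have disj: "C \<inter> S = {}"
        proof (rule ccontr)
          assume "C \<inter> S \<noteq> {}"
          then obtain w where "w \<in> C" "w \<in> S" by blast
          hence "(x, w) \<in> E" using inC by blast
          hence "(w, x) \<in> E" unfolding E_def by (rule E_sym)
          thus False using cS x \<open>w \<in> S\<close> unfolding closedS_def by blast
        qed
        have SV: "S \<subseteq> V" using cS unfolding closedS_def by simp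
        have "card S + card C = card (S \<union> C)" using disj fV SV CV
          by (intro card_Un_disjoint[symmetric]) (auto intro: finite_subset)
        also have "\<dots> \<le> card V" using SV CV fV by (intro card_mono) auto
        finally have cSC: "card S + card C \<le> card V" .
        have "card (f ` S) \<le> card S" by (rule card_image_le) (rule finite_subset[OF SV fV])
        hence bound: "2 * (card (f ` S) + card C) + 1 \<le> card (UNIV :: 'g set)"
          using cSC assms(3) by (simp add: algebra_simps)
        have c3: "3 \<le> card C" using assms(2) x unfolding C_def by force
        obtain h :: "'a \<Rightarrow> 'g" where h: "realizable V A h" "\<forall>v\<in>V-C. h v = 0" "inj_on h C"
          "h ` C \<inter> f ` S = {}"
          using component_real[OF assms(1) x(1) C_def c3 bound] by blast
        define f' where "f' = (\<lambda>v. f v + h v)"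
        have r': "realizable V A f'" unfolding f'_def by (rule realizable_add[OF f(1) h(1)])
        have onS: "\<And>v. v \<in> S \<Longrightarrow> f' v = f v" using h(2) SV disj unfolding f'_def by auto
        have onC: "\<And>v. v \<in> C \<Longrightarrow> f' v = h v" using f(3) CV disj unfolding f'_def by auto
        have "inj_on f' (S \<union> C)"
        proof -
          have "inj_on f' S = inj_on f S" by (rule inj_on_cong) (rule onS)
          hence "inj_on f' S" using f(2) by simp
          moreover have "inj_on f' C = inj_on h C" by (rule inj_on_cong) (rule onC)
          hence "inj_on f' C" using h(3) by simp
          moreover have "f' ` (S - C) \<inter> f' ` (C - S) = {}" using h(4) onS onC by auto
          ultimately show ?thesis by (rule inj_on_Un[THEN iffD2, OF conjI, OF _ conjI])
        qed
        moreover have "\<forall>v\<in>V-(S \<union> C). f' v = 0" using f(3) h(2) unfolding f'_def by auto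
        moreover have "closedS (S \<union> C)"
          unfolding closedS_def
        proof (intro conjI ballI impI)
          show "S \<union> C \<subseteq> V" using SV CV by auto
        next
          fix w y assume "w \<in> S \<union> C" "y \<in> V" "(w, y) \<in> E"
          from \<open>w \<in> S \<union> C\<close> show "y \<in> S \<union> C"
          proof
            assume "w \<in> S" thus ?thesis using cS \<open>y \<in> V\<close> \<open>(w, y) \<in> E\<close> unfolding closedS_def by blast
          next
            assume "w \<in> C"
            hence "(x, w) \<in> E" using inC by blast
            hence "(x, y) \<in> E" using \<open>(w, y) \<in> E\<close> unfolding E_def by (rule rtrancl_trans)
            thus ?thesis using inC \<open>y \<in> V\<close> by blast
          qed
        qed
        moreover have lt: "card (V - (S \<union> C)) < k"
        proof -
          have "V - (S \<union> C) \<subset> V - S" using x xC by blast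
          hence "card (V - (S \<union> C)) < card (V - S)" by (rule psubset_card_mono[rotated]) (use fV in simp)
          thus ?thesis using k by simp
        qed
        ultimately have inj': "inj_on f' (S \<union> C)" and z': "\<forall>v\<in>V-(S \<union> C). f' v = 0"
          and cl': "closedS (S \<union> C)" by blast+
        show ?thesis
          by (rule less.IH[OF lt, rule_format, OF cl' refl]) (use r' inj' z' in blast)
      qed
    qed
  qed
  have "closedS {}" unfolding closedS_def by simp
  moreover have "\<exists>f :: 'a \<Rightarrow> 'g. realizable V A f \<and> inj_on f {} \<and> (\<forall>v\<in>V-{}. f v = 0)"
    using realizable_cong[OF realizable_zero] by (intro exI[of _ "\<lambda>v. 0"]) (simp add: realizable_zero)
  ultimately obtain f :: "'a \<Rightarrow> 'g" where "realizable V A f" "inj_on f V" using main by blast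
  then obtain \<psi> :: "'a \<times> 'a \<Rightarrow> 'g" where "\<forall>v\<in>V. weighted_deg A \<psi> v = f v" "inj_on f V"
    unfolding realizable_def by blast
  hence "inj_on (weighted_deg A \<psi>) V = inj_on f V" by (intro inj_on_cong) simp
  hence "group_irregular V A \<psi>" unfolding group_irregular_def using \<open>inj_on f V\<close> by simp
  thus ?thesis by blast
qed

end
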